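(* Let $L\ge 2$ and let $M_1,\dots,M_L$ be pairwise distinct positive integers. Let $N$ be an integer with $0\le N<\operatorname{lcm}(M_1,\dots,M_L)$, and for $1\le i\le L$ let $r_i\in\{0,\dots,M_i-1\}$ be the remainder of $N$ modulo $M_i$ and $n_i=(N-r_i)/M_i$. Let $\tilde r_1,\dots,\tilde r_L$ be integers with $0\le\tilde r_i\le M_i-1$ and $|\tilde r_i-r_i|\le\tau$ for all $i$, where $$\tau<\max_{1\le i\le L}\ \min_{1\le j\le L,\ j\ne i}\frac{\gcd(M_i,M_j)}{4}.$$ Let $k$ be an index attaining this maximum, i.e. $\min_{j\ne k}\gcd(M_k,M_j)=\max_i\min_{j\ne i}\gcd(M_i,M_j)$. Then the single-stage algorithm (described in the context) run on the moduli $M_1,\dots,M_L$ with reference index $k$ and inputs $\tilde r_1,\dots,\tilde r_L$ outputs $\hat n_i=n_i$ for all $1\le i\le L$.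
   Context: For $x\in\mathbb R$, $[x]$ denotes the unique integer with $-1/2\le x-[x]<1/2$. Single-stage algorithm: let $P_1,\dots,P_m$ ($m\ge2$) be pairwise distinct positive integers, $k\in\{1,\dots,m\}$ a reference index, and $x_1,\dots,x_m$ integers. For each $i\ne k$ put $m_{ki}=\gcd(P_k,P_i)$, $\Gamma_{ki}=P_k/m_{ki}$, $\Gamma_{ik}=P_i/m_{ki}$, $\hat q_{ik}=[(x_i-x_k)/m_{ki}]$; let $\bar\Gamma_{ki}$ be a multiplicative inverse of $\Gamma_{ki}$ modulo $\Gamma_{ik}$, and let $\hat\xi_{ik}\in\{0,\dots,\Gamma_{ik}-1\}$ with $\hat\xi_{ik}\equiv\hat q_{ik}\bar\Gamma_{ki}\pmod{\Gamma_{ik}}$. Let $\hat n_k$ be the least nonnegative integer $y$ with $y\equiv\hat\xi_{ik}\pmod{\Gamma_{ik}}$ for all $i\ne k$ (if no such $y$ exists the algorithm fails). For $i\ne k$ set $\hat n_i=(\hat n_k\Gamma_{ki}-\hat q_{ik})/\Gamma_{ik}$. Outputs: $\hat n_1,\dots,\hat n_m$ and the estimate $[\frac1m\sum_{i=1}^m(\hat n_iP_i+x_i)]$. *)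

theory Defs
  imports Complex_Main "HOL-Number_Theory.Cong"
begin

definition rnd :: "real \<Rightarrow> int" where
  "rnd x = (THE z::int. - 1/2 \<le> x - of_int z \<and> x - of_int z < 1/2)"

text \<open>Returns None if the system of congruences for the
  reference folding integer has no nonnegative solution; otherwise returns the
  estimated folding integers (meaningful for indices in 1..m).\<close>
definition single_stage ::
  "nat \<Rightarrow> (nat \<Rightarrow> int) \<Rightarrow> nat \<Rightarrow> (nat \<Rightarrow> int) \<Rightarrow> (nat \<Rightarrow> int) option" where
  "single_stage m P k x =
    (let mm = (\<lambda>i. gcd (P k) (P i));
         Gki = (\<lambda>i. P k div mm i);
         Gik = (\<lambda>i. P i div mm i);
         q = (\<lambda>i. rnd (of_int (x i - x k) / of_int (mm i)));
         Gbar = (\<lambda>i. SOME g::int. [g * Gki i = 1] (mod Gik i));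
         xi = (\<lambda>i. (q i * Gbar i) mod Gik i);
         S = {y::int. 0 \<le> y \<and> (\<forall>i\<in>{1..m} - {k}. [y = xi i] (mod Gik i))}
     in if S = {} then None
        else (let nk = (LEAST y. y \<in> S)
              in Some (\<lambda>i. if i = k then nk else (nk * Gki i - q i) div Gik i)))"

end

theory Submission
  imports Defs
begin

lemma rnd_int:
  assumes "-1/2 \<le> e" "e < 1/2"
  shows "rnd (of_int z + e) = z"
  unfolding rnd_def
proof (rule the_equality)
  show "- 1 / 2 \<le> real_of_int z + e - real_of_int z \<and> real_of_int z + e - real_of_int z < 1 / 2"
    using assms by simp
next
  fix w assume h: "- 1 / 2 \<le> real_of_int z + e - real_of_int w \<and> real_of_int z + e - real_of_int w < 1 / 2"
  have "real_of_int (z - w) < 1" "real_of_int (z - w) > -1" using h assms by auto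
  then have "z - w < 1" "z - w > -1" by linarith+
  then show "w = z" by linarith
qed

lemma ss_unfold:
  fixes m k :: nat and P x :: "nat \<Rightarrow> int"
  defines "mm \<equiv> (\<lambda>i. gcd (P k) (P i))"
  defines "Gki \<equiv> (\<lambda>i. P k div mm i)"
  defines "Gik \<equiv> (\<lambda>i. P i div mm i)"
  defines "q \<equiv> (\<lambda>i. rnd (of_int (x i - x k) / of_int (mm i)))"
  defines "Gbar \<equiv> (\<lambda>i. SOME g::int. [g * Gki i = 1] (mod Gik i))"
  defines "xi \<equiv> (\<lambda>i. (q i * Gbar i) mod Gik i)"
  defines "S \<equiv> {y::int. 0 \<le> y \<and> (\<forall>i\<in>{1..m} - {k}. [y = xi i] (mod Gik i))}"
  shows "single_stage m P k x = (if S = {} then None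
        else Some (\<lambda>i. if i = k then (LEAST y. y \<in> S) else ((LEAST y. y \<in> S) * Gki i - q i) div Gik i))"
  unfolding single_stage_def Let_def assms by (rule refl)

theorem corollary1:
  fixes L :: nat and M :: "nat \<Rightarrow> int" and N :: int and rt :: "nat \<Rightarrow> int"
    and \<tau> :: real and k :: nat
  assumes "L \<ge> 2"
    and "\<forall>i\<in>{1..L}. M i > 0"
    and "inj_on M {1..L}"
    and "0 \<le> N" and "N < Lcm (M ` {1..L})"
    and "\<forall>i\<in>{1..L}. 0 \<le> rt i \<and> rt i \<le> M i - 1"
    and "\<forall>i\<in>{1..L}. \<bar>real_of_int (rt i - N mod M i)\<bar> \<le> \<tau>"
    and "\<tau> < Max ((\<lambda>i. Min ((\<lambda>j. real_of_int (gcd (M i) (M j)) / 4) ` ({1..L} - {i}))) ` {1..L})"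
    and "k \<in> {1..L}"
    and "Min ((\<lambda>j. gcd (M k) (M j)) ` ({1..L} - {k}))
         = Max ((\<lambda>i. Min ((\<lambda>j. gcd (M i) (M j)) ` ({1..L} - {i}))) ` {1..L})"
  shows "\<exists>nh. single_stage L M k rt = Some nh \<and>
           (\<forall>i\<in>{1..L}. nh i = (N - N mod M i) div M i)"
proof -
  note L2 = assms(1) and Mpos = assms(2) and tauA = assms(7) and tauM = assms(8)
    and kin = assms(9) and kmax = assms(10)
  define A where "A = {1..L} - {k}"
  define n where "n = (\<lambda>i. N div M i)"
  define mm where "mm \<equiv> (\<lambda>i. gcd (M k) (M i))"
  define Gki where "Gki \<equiv> (\<lambda>i. M k div mm i)"
  define Gik where "Gik \<equiv> (\<lambda>i. M i div mm i)"
  define q where "q \<equiv> (\<lambda>i. rnd (of_int (rt i - rt k) / of_int (mm i)))"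
  define Gbar where "Gbar \<equiv> (\<lambda>i. SOME g::int. [g * Gki i = 1] (mod Gik i))"
  define xi where "xi \<equiv> (\<lambda>i. (q i * Gbar i) mod Gik i)"
  define S where "S \<equiv> {y::int. 0 \<le> y \<and> (\<forall>i\<in>{1..L} - {k}. [y = xi i] (mod Gik i))}"
  have unf: "single_stage L M k rt = (if S = {} then None
        else Some (\<lambda>i. if i = k then (LEAST y. y \<in> S) else ((LEAST y. y \<in> S) * Gki i - q i) div Gik i))"
    unfolding S_def xi_def Gbar_def q_def Gik_def Gki_def mm_def by (rule ss_unfold)
  have Mk: "M k > 0" using Mpos kin by blast
  have Aprops: "mm i > 0 \<and> M k = mm i * Gki i \<and> M i = mm i * Gik i \<and> Gik i > 0 \<and> coprime (Gki i) (Gik i)"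
    if "i \<in> A" for i
  proof -
    have Mi: "M i > 0" using Mpos that unfolding A_def by blast
    have m0: "mm i > 0" unfolding mm_def using Mk by simp
    have e1: "M k = mm i * Gki i" unfolding Gki_def mm_def by simp
    have e2: "M i = mm i * Gik i" unfolding Gik_def mm_def by simp
    have "Gik i > 0" using e2 m0 Mi by (simp add: zero_less_mult_iff)
    moreover have "coprime (Gki i) (Gik i)" unfolding Gki_def Gik_def mm_def
      using div_gcd_coprime Mk by (metis less_irrefl)
    ultimately show ?thesis using m0 e1 e2 by blast
  qed
  have finA: "finite A" and neA: "A \<noteq> {}"
  proof -
    show "finite A" unfolding A_def by simp
    have "k \<noteq> 1 \<or> k \<noteq> 2" by auto
    moreover have "1 \<in> {1..L}" "2 \<in> {1..L}" using L2 by auto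
    ultimately show "A \<noteq> {}" unfolding A_def by blast
  qed
  have tau: "4 * \<tau> < real_of_int (mm j)" if "j \<in> A" for j
  proof -
    define g where "g = (\<lambda>i. Min ((\<lambda>j. gcd (M i) (M j)) ` ({1..L} - {i})))"
    define f where "f = (\<lambda>i. Min ((\<lambda>j. real_of_int (gcd (M i) (M j)) / 4) ` ({1..L} - {i})))"
    have ne: "{1..L} - {i} \<noteq> {}" for i :: nat
    proof -
      have "1 \<noteq> i \<or> 2 \<noteq> i" by auto
      moreover have "1 \<in> {1..L}" "2 \<in> {1..L}" using L2 by auto
      ultimately show ?thesis by blast
    qed
    have "Max (f ` {1..L}) \<in> f ` {1..L}" using kin by (intro Max_in) auto
    then obtain i0 where i0: "i0 \<in> {1..L}" "Max (f ` {1..L}) = f i0" by auto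
    have "g i0 \<in> (\<lambda>j. gcd (M i0) (M j)) ` ({1..L} - {i0})" unfolding g_def
      using ne by (intro Min_in) auto
    then obtain j1 where j1: "j1 \<in> {1..L} - {i0}" "g i0 = gcd (M i0) (M j1)" by (elim imageE) blast
    have "f i0 \<le> real_of_int (gcd (M i0) (M j1)) / 4" unfolding f_def
      using j1 by (intro Min_le) auto
    also have "... = real_of_int (g i0) / 4" using j1 by simp
    also have "g i0 \<le> g k"
    proof -
      have "g i0 \<le> Max (g ` {1..L})" using i0 by (intro Max_ge) auto
      moreover have "g k = Max (g ` {1..L})" unfolding g_def using kmax by simp
      ultimately show ?thesis by simp
    qed
    then have "real_of_int (g i0) / 4 \<le> real_of_int (g k) / 4" by simp
    also have "g k \<le> mm j" unfolding g_def mm_def using that A_def by (intro Min_le) auto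
    then have "real_of_int (g k) / 4 \<le> real_of_int (mm j) / 4" by simp
    finally have "f i0 \<le> real_of_int (mm j) / 4" .
    then show ?thesis using tauM i0 unfolding f_def by linarith
  qed
  have qv: "q i = n k * Gki i - n i * Gik i" if "i \<in> A" for i
  proof -
    from Aprops[OF that] have m0: "mm i > 0" and e1: "M k = mm i * Gki i" and e2: "M i = mm i * Gik i" by auto
    have iL: "i \<in> {1..L}" using that A_def by auto
    define di where "di = rt i - N mod M i"
    define dk where "dk = rt k - N mod M k"
    have "N = n i * M i + N mod M i" "N = n k * M k + N mod M k" unfolding n_def by simp_all
    then have diff: "rt i - rt k = mm i * (n k * Gki i - n i * Gik i) + (di - dk)"
      unfolding di_def dk_def using e1 e2 by (simp add: algebra_simps)
    have bi: "\<bar>real_of_int di\<bar> \<le> \<tau>" using tauA iL di_def by blast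
    have bk: "\<bar>real_of_int dk\<bar> \<le> \<tau>" using tauA kin dk_def by blast
    have t: "4 * \<tau> < real_of_int (mm i)" using tau that by blast
    define e where "e = real_of_int (di - dk) / real_of_int (mm i)"
    have "real_of_int (rt i - rt k) / real_of_int (mm i) = real_of_int (n k * Gki i - n i * Gik i) + e"
      unfolding diff e_def using m0 by (simp add: field_simps)
    moreover have "-1/2 \<le> e" "e < 1/2"
    proof -
      have x: "real_of_int (di - dk) < real_of_int (mm i) / 2" "- (real_of_int (mm i) / 2) < real_of_int (di - dk)"
        using bi bk t by (auto simp: abs_le_iff)
      have mp: "real_of_int (mm i) > 0" using m0 by simp
      show "-1/2 \<le> e" unfolding e_def using x(2) mp by (simp add: le_divide_eq)
      show "e < 1/2" unfolding e_def using x(1) mp by (simp add: divide_less_eq)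
    qed
    ultimately show ?thesis unfolding q_def by (simp only: rnd_int)
  qed
  have xic: "[n k = xi i] (mod Gik i)" if "i \<in> A" for i
  proof -
    from Aprops[OF that] have cop: "coprime (Gki i) (Gik i)" by auto
    obtain x where "[Gki i * x = 1] (mod Gik i)" using cong_solve_coprime_int[OF cop] by blast
    then have "\<exists>g. [g * Gki i = 1] (mod Gik i)" by (metis mult.commute)
    then have gb: "[Gbar i * Gki i = 1] (mod Gik i)" unfolding Gbar_def by (rule someI_ex)
    have "[xi i = q i * Gbar i] (mod Gik i)" unfolding xi_def by (simp add: cong_def)
    also have "[q i * Gbar i = n k * (Gbar i * Gki i)] (mod Gik i)"
      unfolding qv[OF that] by (simp add: cong_iff_dvd_diff algebra_simps)
    also have "[n k * (Gbar i * Gki i) = n k * 1] (mod Gik i)" by (intro cong_mult cong_refl gb)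
    finally show ?thesis by (simp add: cong_sym)
  qed
  have nk0: "n k \<ge> 0" unfolding n_def using assms(4) Mk by (simp add: div_int_pos_iff)
  have nkS: "n k \<in> S" unfolding S_def using nk0 xic A_def by auto
  define G where "G = Lcm (Gik ` A)"
  have G0: "G > 0"
  proof -
    have "G \<noteq> 0" unfolding G_def using finA Aprops by (subst Lcm_0_iff) (auto, fastforce)
    moreover have "G \<ge> 0" unfolding G_def by simp
    ultimately show ?thesis by linarith
  qed
  have "Lcm (M ` {1..L}) dvd M k * G"
  proof (rule Lcm_least)
    fix b assume "b \<in> M ` {1..L}"
    then obtain i where i: "i \<in> {1..L}" "b = M i" by auto
    show "b dvd M k * G"
    proof (cases "i = k")
      case True then show ?thesis using i by simp
    next
      case False
      then have iA: "i \<in> A" using i A_def by auto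
      from Aprops[OF iA] have "M k = mm i * Gki i" "M i = mm i * Gik i" by auto
      then have "M i dvd M k * Gik i" by (metis dvd_triv_right mult.assoc mult.commute)
      moreover have "Gik i dvd G" unfolding G_def using iA by (intro dvd_Lcm) auto
      ultimately show ?thesis using i by (meson dvd_trans mult_dvd_mono dvd_refl)
    qed
  qed
  then have "Lcm (M ` {1..L}) \<le> M k * G" using Mk G0 by (intro zdvd_imp_le) auto
  then have "N < M k * G" using assms(5) by linarith
  moreover have "M k * (N div M k) \<le> N"
  proof -
    have "N = M k * (N div M k) + N mod M k" by simp
    moreover have "N mod M k \<ge> 0" using Mk by simp
    ultimately show ?thesis by linarith
  qed
  ultimately have "M k * (N div M k) < M k * G" by linarith
  then have nkG: "n k < G" unfolding n_def using Mk mult_less_cancel_left_pos by blast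
  have least: "(LEAST y. y \<in> S) = n k"
  proof (rule Least_equality)
    show "n k \<in> S" by (rule nkS)
    fix y assume yS: "y \<in> S"
    have "G dvd y - n k" unfolding G_def
    proof (rule Lcm_least)
      fix b assume "b \<in> Gik ` A"
      then obtain i where i: "i \<in> A" "b = Gik i" by auto
      have "[y = xi i] (mod Gik i)" using yS i(1) unfolding S_def A_def by blast
      then have "[y = n k] (mod Gik i)" using xic[OF i(1)] by (metis cong_sym cong_trans)
      then show "b dvd y - n k" using i by (simp add: cong_iff_dvd_diff)
    qed
    then obtain c where c: "y - n k = G * c" by auto
    have "y \<ge> 0" using yS S_def by auto
    show "n k \<le> y"
    proof (rule ccontr)
      assume "\<not> n k \<le> y"
      then have "c < 0" using c G0 by (smt (verit) mult_nonneg_nonneg)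
      then have "G * c \<le> - G" using G0 by (smt (verit) mult_le_cancel_left1 mult_minus_right)
      then show False using c nkG \<open>y \<ge> 0\<close> by linarith
    qed
  qed
  have Sne: "S \<noteq> {}" using nkS by auto
  show ?thesis
  proof (intro exI conjI)
    show "single_stage L M k rt = Some (\<lambda>i. if i = k then (LEAST y. y \<in> S) else ((LEAST y. y \<in> S) * Gki i - q i) div Gik i)"
      using unf Sne by simp
    show "\<forall>i\<in>{1..L}. (\<lambda>i. if i = k then (LEAST y. y \<in> S) else ((LEAST y. y \<in> S) * Gki i - q i) div Gik i) i = (N - N mod M i) div M i"
    proof
      fix i assume i: "i \<in> {1..L}"
      have r: "(N - N mod M i) div M i = n i" unfolding n_def by (simp add: minus_mod_eq_mult_div)
      show "(\<lambda>i. if i = k then (LEAST y. y \<in> S) else ((LEAST y. y \<in> S) * Gki i - q i) div Gik i) i = (N - N mod M i) div M i"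
      proof (cases "i = k")
        case True then show ?thesis using least r by simp
      next
        case False
        then have iA: "i \<in> A" using i A_def by auto
        have "(n k * Gki i - q i) div Gik i = n i" using qv[OF iA] Aprops[OF iA] by simp
        then show ?thesis using False least r by simp
      qed
    qed
  qed
qed

end
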